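(* Let $G$ be a finite stochastic game satisfying the standing assumptions below. Consider the sequence generated by the outer loop of policy iteration with fictitious play (PI-FP): start from an arbitrary assignment $V^0 : Q_{NT}\times N\to\mathbb{R}$ of values to all players at all nonterminal states; for $n=1,2,\dots$, let $s^n$ be a stationary strategy profile such that for every nonterminal state $q$, the mixed profile $s^n(q)$ is a Nash equilibrium of the stage game $\Gamma_q(V^{n-1})$; then let $V^n = V^{s^n}$, the vector of expected total payoffs of $s^n$ from each nonterminal state. If the sequence $(s^n)_{n\ge 1}$ converges to a stationary profile $s^*$, then $s^*$ is a Nash equilibrium of $G$ (no player can increase its expected total payoff from any state by unilaterally deviating to any strategy, stationary or not).
   Context: A finite stochastic game consists of a finite set $N$ of players, a finite set $Q$ of states partitioned into nonterminal states $Q_{NT}$ and absorbing terminal states $Q_T$, finite action sets $A_i$ for each player $i$, and transition probabilities $P(q,a,\hat q)$ for $q\in Q_{NT}$, action profiles $a\in A=\prod_i A_i$ and $\hat q\in Q$. Each terminal state $t\in Q_T$ gives each player $i$ a payoff $u_i(t)\in\mathbb{R}$, and there are no other rewards; a player's payoff is the (undiscounted) payoff received at the terminal state reached. Standing assumption: there is a finite $T$ such that, regardless of the actions chosen, play started at any nonterminal state reaches a terminal state within at most $T$ stages (as in the hostility game, where every action has positive hostility level and the state is the cumulative hostility, which terminates once a threshold is reached). A stationary strategy for player $i$ assigns to each nonterminal state a probability distribution over $A_i$. For a stationary profile $s$, $V^s_i(q)$ denotes player $i$'s expected terminal payoff when play starts at $q$ and all players follow $s$ (with $V^s_i(t)=u_i(t)$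 for terminal $t$); it is the unique solution of $V_i(q)=\sum_{a}s(q)(a)\sum_{\hat q}P(q,a,\hat q)V_i(\hat q)$. Given values $V:Q_{NT}\times N\to\mathbb{R}$ (extended by $V_i(t)=u_i(t)$ on terminal states), the stage game $\Gamma_q(V)$ at nonterminal state $q$ is the one-shot normal-form game with action sets $A_i$ and payoffs $\sum_{\hat q}P(q,a,\hat q)V_i(\hat q)$ to player $i$ under action profile $a$. *)

theory Defs
  imports "HOL-Probability.Probability_Mass_Function" "HOL-Library.FuncSet"
begin

text \<open>A finite stochastic game with terminal payoffs. Players 'i, states 'q, actions 'a.\<close>

record ('i, 'q, 'a) sgame =
  players :: "'i set"
  nonterm_states :: "'q set"
  term_states :: "'q set"
  acts :: "'i \<Rightarrow> 'a set"
  trans :: "'q \<Rightarrow> ('i \<Rightarrow> 'a) \<Rightarrow> 'q \<Rightarrow> real"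
  util :: "'q \<Rightarrow> 'i \<Rightarrow> real"

definition states :: "('i, 'q, 'a) sgame \<Rightarrow> 'q set" where
  "states G = nonterm_states G \<union> term_states G"

definition profiles :: "('i, 'q, 'a) sgame \<Rightarrow> ('i \<Rightarrow> 'a) set" where
  "profiles G = PiE (players G) (acts G)"

definition step :: "('i, 'q, 'a) sgame \<Rightarrow> 'q \<Rightarrow> 'q \<Rightarrow> bool" where
  "step G q q' \<longleftrightarrow> q \<in> nonterm_states G \<and> (\<exists>a\<in>profiles G. trans G q a q' > 0)"

text \<open>Standing assumptions: finiteness, transition probabilities, and termination
  within at most T stages regardless of the actions chosen (no path of positive-probability
  transitions visits T+1 nonterminal states).\<close>
definition finite_sgame :: "('i, 'q, 'a) sgame \<Rightarrow> bool" where
  "finite_sgame G \<longleftrightarrow>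
     finite (players G) \<and> finite (nonterm_states G) \<and> finite (term_states G) \<and>
     nonterm_states G \<inter> term_states G = {} \<and>
     (\<forall>i\<in>players G. finite (acts G i) \<and> acts G i \<noteq> {}) \<and>
     (\<forall>q\<in>nonterm_states G. \<forall>a\<in>profiles G.
        (\<forall>q'. trans G q a q' \<ge> 0) \<and> (\<forall>q'. q' \<notin> states G \<longrightarrow> trans G q a q' = 0) \<and>
        (\<Sum>q'\<in>states G. trans G q a q') = 1) \<and>
     (\<exists>T::nat. \<forall>f::nat \<Rightarrow> 'q. f 0 \<in> nonterm_states G \<longrightarrow>
        \<not> (\<forall>k<T. step G (f k) (f (Suc k)) \<and> f (Suc k) \<in> nonterm_states G))"

definition prof_prob :: "('i, 'q, 'a) sgame \<Rightarrow> ('i \<Rightarrow> 'a pmf) \<Rightarrow> ('i \<Rightarrow> 'a) \<Rightarrow> real" where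
  "prof_prob G x a = (\<Prod>j\<in>players G. pmf (x j) (a j))"

definition valid_mixed :: "('i, 'q, 'a) sgame \<Rightarrow> 'i \<Rightarrow> 'a pmf \<Rightarrow> bool" where
  "valid_mixed G i y \<longleftrightarrow> set_pmf y \<subseteq> acts G i"

definition stationary_profile :: "('i, 'q, 'a) sgame \<Rightarrow> ('i \<Rightarrow> 'q \<Rightarrow> 'a pmf) \<Rightarrow> bool" where
  "stationary_profile G s \<longleftrightarrow>
     (\<forall>i\<in>players G. \<forall>q\<in>nonterm_states G. valid_mixed G i (s i q))"

text \<open>V^s: the unique solution of the value equations, with V_i(t) = u_i(t) on terminal states
  (and, for definiteness, 0 outside the state set).\<close>
definition stat_value :: "('i, 'q, 'a) sgame \<Rightarrow> ('i \<Rightarrow> 'q \<Rightarrow> 'a pmf) \<Rightarrow> 'q \<Rightarrow> 'i \<Rightarrow> real" where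
  "stat_value G s = (THE V.
      (\<forall>q\<in>term_states G. \<forall>i. V q i = util G q i) \<and>
      (\<forall>q\<in>nonterm_states G. \<forall>i. V q i =
          (\<Sum>a\<in>profiles G. prof_prob G (\<lambda>j. s j q) a * (\<Sum>q'\<in>states G. trans G q a q' * V q' i))) \<and>
      (\<forall>q. q \<notin> states G \<longrightarrow> (\<forall>i. V q i = 0)))"

definition ext_val :: "('i, 'q, 'a) sgame \<Rightarrow> ('q \<Rightarrow> 'i \<Rightarrow> real) \<Rightarrow> 'q \<Rightarrow> 'i \<Rightarrow> real" where
  "ext_val G V q i = (if q \<in> term_states G then util G q i else V q i)"

definition stage_util :: "('i, 'q, 'a) sgame \<Rightarrow> ('q \<Rightarrow> 'i \<Rightarrow> real) \<Rightarrow> 'q \<Rightarrow> ('i \<Rightarrow> 'a pmf) \<Rightarrow> 'i \<Rightarrow> real" where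
  "stage_util G V q x i =
     (\<Sum>a\<in>profiles G. prof_prob G x a * (\<Sum>q'\<in>states G. trans G q a q' * ext_val G V q' i))"

definition stage_nash :: "('i, 'q, 'a) sgame \<Rightarrow> ('q \<Rightarrow> 'i \<Rightarrow> real) \<Rightarrow> 'q \<Rightarrow> ('i \<Rightarrow> 'a pmf) \<Rightarrow> bool" where
  "stage_nash G V q x \<longleftrightarrow>
     (\<forall>i\<in>players G. valid_mixed G i (x i)) \<and>
     (\<forall>i\<in>players G. \<forall>y. valid_mixed G i y \<longrightarrow> stage_util G V q (x(i := y)) i \<le> stage_util G V q x i)"

text \<open>General (history-dependent, behavioural) strategies. A history is the list of past
  (state, action profile) pairs; sigma j h q is player j's mixed action at current state q.\<close>
type_synonym ('i, 'q, 'a) hist = "('q \<times> ('i \<Rightarrow> 'a)) list"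

definition valid_behav :: "('i, 'q, 'a) sgame \<Rightarrow> 'i \<Rightarrow> (('i, 'q, 'a) hist \<Rightarrow> 'q \<Rightarrow> 'a pmf) \<Rightarrow> bool" where
  "valid_behav G i \<tau> \<longleftrightarrow> (\<forall>h. \<forall>q\<in>nonterm_states G. valid_mixed G i (\<tau> h q))"

text \<open>Expected terminal payoff of player i when play is truncated after n stages
  (unterminated play contributes 0), starting at q after history h.\<close>
primrec hpay :: "('i, 'q, 'a) sgame \<Rightarrow> ('i \<Rightarrow> ('i, 'q, 'a) hist \<Rightarrow> 'q \<Rightarrow> 'a pmf) \<Rightarrow> nat
                   \<Rightarrow> ('i, 'q, 'a) hist \<Rightarrow> 'q \<Rightarrow> 'i \<Rightarrow> real" where
  "hpay G \<sigma> 0 h q i = (if q \<in> term_states G then util G q i else 0)"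
| "hpay G \<sigma> (Suc n) h q i =
     (if q \<in> term_states G then util G q i
      else if q \<in> nonterm_states G then
        (\<Sum>a\<in>profiles G. prof_prob G (\<lambda>j. \<sigma> j h q) a *
            (\<Sum>q'\<in>states G. trans G q a q' * hpay G \<sigma> n (h @ [(q, a)]) q' i))
      else 0)"

definition game_payoff :: "('i, 'q, 'a) sgame \<Rightarrow> ('i \<Rightarrow> ('i, 'q, 'a) hist \<Rightarrow> 'q \<Rightarrow> 'a pmf)
                           \<Rightarrow> 'q \<Rightarrow> 'i \<Rightarrow> real" where
  "game_payoff G \<sigma> q i = lim (\<lambda>n. hpay G \<sigma> n [] q i)"

definition stat_embed :: "('i \<Rightarrow> 'q \<Rightarrow> 'a pmf) \<Rightarrow> 'i \<Rightarrow> ('i, 'q, 'a) hist \<Rightarrow> 'q \<Rightarrow> 'a pmf" where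
  "stat_embed s = (\<lambda>i h q. s i q)"

definition game_nash :: "('i, 'q, 'a) sgame \<Rightarrow> ('i \<Rightarrow> 'q \<Rightarrow> 'a pmf) \<Rightarrow> bool" where
  "game_nash G s \<longleftrightarrow> stationary_profile G s \<and>
     (\<forall>i\<in>players G. \<forall>\<tau>. valid_behav G i \<tau> \<longrightarrow>
        (\<forall>q\<in>nonterm_states G.
           game_payoff G ((stat_embed s)(i := \<tau>)) q i \<le> game_payoff G (stat_embed s) q i))"

end

theory Submission imports Defs begin

definition nochain :: "('i, 'q, 'a) sgame \<Rightarrow> nat \<Rightarrow> 'q \<Rightarrow> bool" where
  "nochain G k q \<longleftrightarrow> \<not> (\<exists>f. f 0 = q \<and> (\<forall>j<k. step G (f j) (f (Suc j)) \<and> f (Suc j) \<in> nonterm_states G))"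

lemma nochain_0: "\<not> nochain G 0 q"
  unfolding nochain_def by (auto intro!: exI[of _ "\<lambda>_. q"])

lemma nochain_step:
  assumes "nochain G (Suc k) q" "step G q q'" "q' \<in> nonterm_states G"
  shows "nochain G k q'"
proof (unfold nochain_def, rule notI)
  assume "\<exists>f. f 0 = q' \<and> (\<forall>j<k. step G (f j) (f (Suc j)) \<and> f (Suc j) \<in> nonterm_states G)"
  then obtain f where f0: "f 0 = q'" and fk: "\<forall>j<k. step G (f j) (f (Suc j)) \<and> f (Suc j) \<in> nonterm_states G"
    by blast
  define g where "g = (\<lambda>j. case j of 0 \<Rightarrow> q | Suc j' \<Rightarrow> f j')"
  have "\<forall>j<Suc k. step G (g j) (g (Suc j)) \<and> g (Suc j) \<in> nonterm_states G"
  proof (intro allI impI)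
    fix j assume "j < Suc k"
    then show "step G (g j) (g (Suc j)) \<and> g (Suc j) \<in> nonterm_states G"
      by (cases j) (use f0 fk assms(2,3) in \<open>auto simp: g_def\<close>)
  qed
  moreover have "g 0 = q" by (simp add: g_def)
  ultimately show False using assms(1) unfolding nochain_def by blast
qed

lemma fin_T: "finite_sgame G \<Longrightarrow> \<exists>T. \<forall>q\<in>nonterm_states G. nochain G T q"
  unfolding finite_sgame_def nochain_def by blast

lemma nonterm_induct:
  assumes "finite_sgame G" and "q \<in> nonterm_states G"
    and IS: "\<And>q. q \<in> nonterm_states G \<Longrightarrow> (\<And>q'. step G q q' \<Longrightarrow> q' \<in> nonterm_states G \<Longrightarrow> P q') \<Longrightarrow> P q"
  shows "P q"
proof -
  obtain T where T: "\<forall>q\<in>nonterm_states G. nochain G T q" using fin_T[OF assms(1)] by blast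
  have "\<forall>q\<in>nonterm_states G. nochain G k q \<longrightarrow> P q" for k
  proof (induction k)
    case 0 then show ?case using nochain_0[of G] by simp
  next
    case (Suc k)
    show ?case
    proof (intro ballI impI)
      fix q assume q: "q \<in> nonterm_states G" "nochain G (Suc k) q"
      show "P q" by (rule IS[OF q(1)]) (use Suc.IH nochain_step[OF q(2)] in blast)
    qed
  qed
  then show ?thesis using T assms(2) by blast
qed

lemma fin_facts:
  assumes "finite_sgame G"
  shows "finite (profiles G)" "finite (states G)" "nonterm_states G \<inter> term_states G = {}"
    "\<And>q a q'. q \<in> nonterm_states G \<Longrightarrow> a \<in> profiles G \<Longrightarrow> trans G q a q' \<ge> 0"
  using assms unfolding finite_sgame_def profiles_def states_def
  by (auto intro!: finite_PiE)

lemma trans_step: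
  assumes "finite_sgame G" "q \<in> nonterm_states G" "a \<in> profiles G" "trans G q a q' \<noteq> 0"
  shows "step G q q'"
  using fin_facts(4)[OF assms(1-3), of q'] assms unfolding step_def by force

lemma prof_prob_nonneg: "prof_prob G x a \<ge> 0"
  unfolding prof_prob_def by (simp add: prod_nonneg)

lemma hpay_term: "q \<in> term_states G \<Longrightarrow> hpay G \<sigma> n h q i = util G q i"
  by (cases n) auto

lemma hpay_stab:
  assumes "finite_sgame G"
  shows "q \<in> nonterm_states G \<Longrightarrow> nochain G k q \<Longrightarrow> hpay G \<sigma> (k + m) h q i = hpay G \<sigma> k h q i"
proof (induction k arbitrary: q h)
  case 0 then show ?case using nochain_0[of G] by simp
next
  case (Suc k)
  have nt: "q \<notin> term_states G" using Suc.prems(1) fin_facts(3)[OF assms] by blast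
  have "(\<Sum>q'\<in>states G. trans G q a q' * hpay G \<sigma> (k + m) (h @ [(q, a)]) q' i)
      = (\<Sum>q'\<in>states G. trans G q a q' * hpay G \<sigma> k (h @ [(q, a)]) q' i)" if a: "a \<in> profiles G" for a
  proof (rule sum.cong[OF refl])
    fix q' assume q': "q' \<in> states G"
    show "trans G q a q' * hpay G \<sigma> (k + m) (h @ [(q, a)]) q' i = trans G q a q' * hpay G \<sigma> k (h @ [(q, a)]) q' i"
    proof (cases "trans G q a q' = 0")
      case False
      then have st: "step G q q'" using trans_step[OF assms Suc.prems(1) a] by blast
      show ?thesis
      proof (cases "q' \<in> term_states G")
        case True then show ?thesis by (simp add: hpay_term)
      next
        case nt': False
        then have "q' \<in> nonterm_states G" using q' unfolding states_def by blast
        then show ?thesis using Suc.IH nochain_step[OF Suc.prems(2) st] by simp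
      qed
    qed simp
  qed
  then show ?case using nt Suc.prems(1) by simp
qed

lemma hpay_hist: "hpay G (stat_embed s) n h q i = hpay G (stat_embed s) n [] q i"
proof (induction n arbitrary: h q)
  case 0 then show ?case by simp
next
  case (Suc n)
  have e: "(\<lambda>j. stat_embed s j h' q) = (\<lambda>j. s j q)" for h' by (simp add: stat_embed_def)
  show ?case by (simp only: hpay.simps e append_Nil Suc.IH[of "h @ _"] Suc.IH[of "[_]"])
qed


definition Wst :: "('i, 'q, 'a) sgame \<Rightarrow> nat \<Rightarrow> ('i \<Rightarrow> 'q \<Rightarrow> 'a pmf) \<Rightarrow> 'q \<Rightarrow> 'i \<Rightarrow> real" where
  "Wst G T s q i = (if q \<in> term_states G then util G q i
     else if q \<in> nonterm_states G then hpay G (stat_embed s) T [] q i else 0)"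

lemma Wst_eq:
  assumes G: "finite_sgame G" and T: "\<forall>q\<in>nonterm_states G. nochain G T q" and q: "q \<in> nonterm_states G"
  shows "Wst G T s q i = (\<Sum>a\<in>profiles G. prof_prob G (\<lambda>j. s j q) a *
            (\<Sum>q'\<in>states G. trans G q a q' * Wst G T s q' i))"
proof -
  have nt: "q \<notin> term_states G" using q fin_facts(3)[OF G] by blast
  obtain T' where T': "T = Suc T'" using T q nochain_0[of G] by (cases T) auto
  have e: "(\<lambda>j. stat_embed s j h q) = (\<lambda>j. s j q)" for h by (simp add: stat_embed_def)
  have "(\<Sum>q'\<in>states G. trans G q a q' * hpay G (stat_embed s) T' [(q, a)] q' i)
      = (\<Sum>q'\<in>states G. trans G q a q' * Wst G T s q' i)" if a: "a \<in> profiles G" for a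
  proof (rule sum.cong[OF refl])
    fix q' assume q': "q' \<in> states G"
    show "trans G q a q' * hpay G (stat_embed s) T' [(q, a)] q' i = trans G q a q' * Wst G T s q' i"
    proof (cases "trans G q a q' = 0")
      case False
      then have st: "step G q q'" using trans_step[OF G q a] by blast
      show ?thesis
      proof (cases "q' \<in> term_states G")
        case True then show ?thesis by (simp add: hpay_term Wst_def)
      next
        case nt': False
        then have q'n: "q' \<in> nonterm_states G" using q' unfolding states_def by blast
        have nc: "nochain G T' q'" using nochain_step[OF _ st q'n] T q T' by blast
        have "hpay G (stat_embed s) T' [(q, a)] q' i = hpay G (stat_embed s) T' [] q' i"
          by (rule hpay_hist)
        also have "\<dots> = hpay G (stat_embed s) (T' + 1) [] q' i"
          using hpay_stab[OF G q'n nc, of "stat_embed s" 1] by simp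
        also have "\<dots> = Wst G T s q' i" using nt' q'n T' by (simp add: Wst_def)
        finally show ?thesis by simp
      qed
    qed simp
  qed
  then show ?thesis using nt q T' by (simp add: Wst_def e)
qed

lemma Wst_unique:
  assumes G: "finite_sgame G" and T: "\<forall>q\<in>nonterm_states G. nochain G T q"
    and V: "(\<forall>q\<in>term_states G. \<forall>i. V q i = util G q i) \<and>
      (\<forall>q\<in>nonterm_states G. \<forall>i. V q i =
          (\<Sum>a\<in>profiles G. prof_prob G (\<lambda>j. s j q) a * (\<Sum>q'\<in>states G. trans G q a q' * V q' i))) \<and>
      (\<forall>q. q \<notin> states G \<longrightarrow> (\<forall>i. V q i = 0))"
  shows "V = Wst G T s"
proof (intro ext)
  fix q i
  show "V q i = Wst G T s q i"
  proof (cases "q \<in> nonterm_states G")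
    case True
    have "\<forall>i. V q i = Wst G T s q i"
    proof (rule nonterm_induct[OF G True])
      fix q assume q1: "q \<in> nonterm_states G" and
        IH: "\<And>q'. step G q q' \<Longrightarrow> q' \<in> nonterm_states G \<Longrightarrow> \<forall>i. V q' i = Wst G T s q' i"
      show "\<forall>i. V q i = Wst G T s q i"
      proof
        fix i
        have inner: "trans G q a q' * V q' i = trans G q a q' * Wst G T s q' i"
          if a: "a \<in> profiles G" and q': "q' \<in> states G" for a q'
        proof -
          show "trans G q a q' * V q' i = trans G q a q' * Wst G T s q' i"
          proof (cases "trans G q a q' = 0")
            case False
            then have st: "step G q q'" using trans_step[OF G q1 a] by blast
            show ?thesis
            proof (cases "q' \<in> term_states G")
              case True then show ?thesis using V by (simp add: Wst_def)
            next
              case False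
              then have "q' \<in> nonterm_states G" using q' unfolding states_def by blast
              then show ?thesis using IH[OF st] by simp
            qed
          qed simp
        qed
        have "V q i = (\<Sum>a\<in>profiles G. prof_prob G (\<lambda>j. s j q) a * (\<Sum>q'\<in>states G. trans G q a q' * V q' i))"
          using V q1 by blast
        also have "\<dots> = (\<Sum>a\<in>profiles G. prof_prob G (\<lambda>j. s j q) a * (\<Sum>q'\<in>states G. trans G q a q' * Wst G T s q' i))"
          by (simp add: inner cong: sum.cong)
        also have "\<dots> = Wst G T s q i" using Wst_eq[OF G T q1] by simp
        finally show "V q i = Wst G T s q i" .
      qed
    qed
    then show ?thesis by blast
  next
    case False
    then show ?thesis using V fin_facts(3)[OF G] unfolding Wst_def states_def by auto
  qed
qed

lemma stat_value_Wst:
  assumes G: "finite_sgame G" and T: "\<forall>q\<in>nonterm_states G. nochain G T q"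
  shows "stat_value G s = Wst G T s"
  unfolding stat_value_def
proof (rule the_equality)
  show "(\<forall>q\<in>term_states G. \<forall>i. Wst G T s q i = util G q i) \<and>
      (\<forall>q\<in>nonterm_states G. \<forall>i. Wst G T s q i =
          (\<Sum>a\<in>profiles G. prof_prob G (\<lambda>j. s j q) a * (\<Sum>q'\<in>states G. trans G q a q' * Wst G T s q' i))) \<and>
      (\<forall>q. q \<notin> states G \<longrightarrow> (\<forall>i. Wst G T s q i = 0))"
    using Wst_eq[OF G T] by (auto simp: Wst_def states_def)
qed (rule Wst_unique[OF G T])

lemma game_payoff_T:
  assumes G: "finite_sgame G" and T: "\<forall>q\<in>nonterm_states G. nochain G T q" and q: "q \<in> nonterm_states G"
  shows "game_payoff G \<sigma> q i = hpay G \<sigma> T [] q i"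
proof -
  have "(\<lambda>n. hpay G \<sigma> (n + T) [] q i) \<longlonglongrightarrow> hpay G \<sigma> T [] q i"
    using hpay_stab[OF G q, of T \<sigma>] T q by (simp add: add.commute)
  then have "(\<lambda>n. hpay G \<sigma> n [] q i) \<longlonglongrightarrow> hpay G \<sigma> T [] q i"
    by (rule LIMSEQ_offset)
  then show ?thesis unfolding game_payoff_def by (rule limI)
qed


lemma prof_prob_tendsto:
  assumes "\<And>j b. j \<in> players G \<Longrightarrow> (\<lambda>n. pmf (x n j) b) \<longlonglongrightarrow> pmf (y j) b"
  shows "(\<lambda>n. prof_prob G (x n) a) \<longlonglongrightarrow> prof_prob G y a"
  unfolding prof_prob_def by (intro tendsto_prod) (use assms in auto)

lemma stage_util_tendsto:
  assumes xconv: "\<And>j b. j \<in> players G \<Longrightarrow> (\<lambda>n. pmf (x n j) b) \<longlonglongrightarrow> pmf (y j) b"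
    and Vconv: "\<And>q'. q' \<in> nonterm_states G \<Longrightarrow> (\<lambda>n. Vs n q' i) \<longlonglongrightarrow> Vl q' i"
  shows "(\<lambda>n. stage_util G (Vs n) q (x n) i) \<longlonglongrightarrow> stage_util G Vl q y i"
proof -
  have ev: "(\<lambda>n. ext_val G (Vs n) q' i) \<longlonglongrightarrow> ext_val G Vl q' i" if "q' \<in> states G" for q'
  proof (cases "q' \<in> term_states G")
    case True then show ?thesis by (simp add: ext_val_def)
  next
    case False
    then have "q' \<in> nonterm_states G" using that unfolding states_def by blast
    then show ?thesis using False Vconv by (simp add: ext_val_def)
  qed
  show ?thesis unfolding stage_util_def
    by (intro tendsto_sum tendsto_mult prof_prob_tendsto tendsto_const ev xconv)
qed

lemma Wst_cont:
  assumes G: "finite_sgame G" and T: "\<forall>q\<in>nonterm_states G. nochain G T q"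
    and conv: "\<And>j q b. j \<in> players G \<Longrightarrow> q \<in> nonterm_states G \<Longrightarrow>
                   (\<lambda>n. pmf (s n j q) b) \<longlonglongrightarrow> pmf (t j q) b"
    and q: "q \<in> nonterm_states G"
  shows "(\<lambda>n. Wst G T (s n) q i) \<longlonglongrightarrow> Wst G T t q i"
proof -
  have "\<forall>i. (\<lambda>n. Wst G T (s n) q i) \<longlonglongrightarrow> Wst G T t q i"
  proof (rule nonterm_induct[OF G q])
    fix q assume q1: "q \<in> nonterm_states G" and
      IH: "\<And>q'. step G q q' \<Longrightarrow> q' \<in> nonterm_states G \<Longrightarrow> \<forall>i. (\<lambda>n. Wst G T (s n) q' i) \<longlonglongrightarrow> Wst G T t q' i"
    show "\<forall>i. (\<lambda>n. Wst G T (s n) q i) \<longlonglongrightarrow> Wst G T t q i"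
    proof
      fix i
      have inner: "(\<lambda>n. trans G q a q' * Wst G T (s n) q' i) \<longlonglongrightarrow> trans G q a q' * Wst G T t q' i"
        if a: "a \<in> profiles G" and q': "q' \<in> states G" for a q'
      proof (cases "trans G q a q' = 0")
        case False
        then have st: "step G q q'" using trans_step[OF G q1 a] by blast
        show ?thesis
        proof (cases "q' \<in> term_states G")
          case True then show ?thesis by (simp add: Wst_def)
        next
          case False
          then have "q' \<in> nonterm_states G" using q' unfolding states_def by blast
          then show ?thesis using IH[OF st] by (intro tendsto_mult tendsto_const) auto
        qed
      qed simp
      have e1: "(\<lambda>n. Wst G T (s n) q i) = (\<lambda>n. \<Sum>a\<in>profiles G. prof_prob G (\<lambda>j. s n j q) a *
            (\<Sum>q'\<in>states G. trans G q a q' * Wst G T (s n) q' i))"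
        using Wst_eq[OF G T q1] by auto
      have "(\<lambda>n. \<Sum>a\<in>profiles G. prof_prob G (\<lambda>j. s n j q) a *
            (\<Sum>q'\<in>states G. trans G q a q' * Wst G T (s n) q' i)) \<longlonglongrightarrow>
            (\<Sum>a\<in>profiles G. prof_prob G (\<lambda>j. t j q) a *
            (\<Sum>q'\<in>states G. trans G q a q' * Wst G T t q' i))"
        by (intro tendsto_sum tendsto_mult prof_prob_tendsto inner conv q1)
      then show "(\<lambda>n. Wst G T (s n) q i) \<longlonglongrightarrow> Wst G T t q i"
        unfolding e1 using Wst_eq[OF G T q1] by simp
    qed
  qed
  then show ?thesis by blast
qed

theorem proposition1:
  fixes G :: "('i, 'q, 'a) sgame"
    and V :: "nat \<Rightarrow> 'q \<Rightarrow> 'i \<Rightarrow> real"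
    and s :: "nat \<Rightarrow> 'i \<Rightarrow> 'q \<Rightarrow> 'a pmf"
    and s_star :: "'i \<Rightarrow> 'q \<Rightarrow> 'a pmf"
  assumes game: "finite_sgame G"
    and stage: "\<And>n q. q \<in> nonterm_states G \<Longrightarrow> stage_nash G (V n) q (\<lambda>i. s (Suc n) i q)"
    and vals: "\<And>n q i. q \<in> nonterm_states G \<Longrightarrow> i \<in> players G \<Longrightarrow>
                   V (Suc n) q i = stat_value G (s (Suc n)) q i"
    and limit_stat: "stationary_profile G s_star"
    and conv: "\<And>i q a. i \<in> players G \<Longrightarrow> q \<in> nonterm_states G \<Longrightarrow>
                   (\<lambda>n. pmf (s n i q) a) \<longlonglongrightarrow> pmf (s_star i q) a"
  shows "game_nash G s_star"
proof -
  obtain T where T: "\<forall>q\<in>nonterm_states G. nochain G T q" using fin_T[OF game] by blast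
  define W where "W = Wst G T s_star"
  have extW: "ext_val G W = W"
    by (intro ext) (simp add: ext_val_def W_def Wst_def)
  have conv1: "(\<lambda>n. pmf (s (Suc n) j q) b) \<longlonglongrightarrow> pmf (s_star j q) b"
    if "j \<in> players G" "q \<in> nonterm_states G" for j q b
    using LIMSEQ_Suc[OF conv[OF that]] .
  have conv2: "(\<lambda>n. pmf (s (Suc (Suc n)) j q) b) \<longlonglongrightarrow> pmf (s_star j q) b"
    if "j \<in> players G" "q \<in> nonterm_states G" for j q b
    using LIMSEQ_Suc[OF conv1[OF that]] .
  have Vc: "(\<lambda>n. V (Suc n) q' i) \<longlonglongrightarrow> W q' i"
    if i: "i \<in> players G" and q': "q' \<in> nonterm_states G" for i q'
  proof -
    have "(\<lambda>n. V (Suc n) q' i) = (\<lambda>n. Wst G T (s (Suc n)) q' i)"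
      using vals[OF q' i] stat_value_Wst[OF game T] by auto
    then show ?thesis unfolding W_def using Wst_cont[OF game T conv1 q'] by simp
  qed
  have LN: "stage_util G W q ((\<lambda>j. s_star j q)(i := y)) i \<le> stage_util G W q (\<lambda>j. s_star j q) i"
    if i: "i \<in> players G" and q: "q \<in> nonterm_states G" and y: "valid_mixed G i y" for i q y
  proof (rule LIMSEQ_le)
    show "(\<lambda>n. stage_util G (V (Suc n)) q ((\<lambda>j. s (Suc (Suc n)) j q)(i := y)) i) \<longlonglongrightarrow>
          stage_util G W q ((\<lambda>j. s_star j q)(i := y)) i"
      by (rule stage_util_tendsto) (auto intro: Vc[OF i] conv2[OF _ q])
    show "(\<lambda>n. stage_util G (V (Suc n)) q (\<lambda>j. s (Suc (Suc n)) j q) i) \<longlonglongrightarrow>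
          stage_util G W q (\<lambda>j. s_star j q) i"
      by (rule stage_util_tendsto) (auto intro: Vc[OF i] conv2[OF _ q])
    show "\<exists>N. \<forall>n\<ge>N. stage_util G (V (Suc n)) q ((\<lambda>j. s (Suc (Suc n)) j q)(i := y)) i
              \<le> stage_util G (V (Suc n)) q (\<lambda>j. s (Suc (Suc n)) j q) i"
      using stage[OF q, of "Suc n" for n] i y unfolding stage_nash_def by blast
  qed
  have Weq: "W q i = stage_util G W q (\<lambda>j. s_star j q) i" if q: "q \<in> nonterm_states G" for q i
    unfolding stage_util_def extW unfolding W_def by (rule Wst_eq[OF game T q])
  show ?thesis
    unfolding game_nash_def
  proof (intro conjI limit_stat ballI allI impI)
    fix i \<tau> q
    assume i: "i \<in> players G" and \<tau>: "valid_behav G i \<tau>" and q: "q \<in> nonterm_states G"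
    define \<sigma> where "\<sigma> = (stat_embed s_star)(i := \<tau>)"
    have pe: "(\<lambda>j. \<sigma> j h q) = (\<lambda>j. s_star j q)(i := \<tau> h q)" for h q
      by (auto simp: \<sigma>_def stat_embed_def)
    have bound: "\<forall>q\<in>nonterm_states G. nochain G k q \<longrightarrow> (\<forall>h. hpay G \<sigma> k h q i \<le> W q i)" for k
    proof (induction k)
      case 0 then show ?case using nochain_0[of G] by simp
    next
      case (Suc k)
      show ?case
      proof (intro ballI impI allI)
        fix q h assume q1: "q \<in> nonterm_states G" and nc: "nochain G (Suc k) q"
        have nt: "q \<notin> term_states G" using q1 fin_facts(3)[OF game] by blast
        have inner: "trans G q a q' * hpay G \<sigma> k (h @ [(q, a)]) q' i \<le> trans G q a q' * ext_val G W q' i"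
          if a: "a \<in> profiles G" and q': "q' \<in> states G" for a q'
        proof (cases "trans G q a q' = 0")
          case False
          then have st: "step G q q'" using trans_step[OF game q1 a] by blast
          have tn: "trans G q a q' \<ge> 0" using fin_facts(4)[OF game q1 a] .
          show ?thesis
          proof (cases "q' \<in> term_states G")
            case True then show ?thesis by (simp add: hpay_term ext_val_def)
          next
            case False
            then have q'n: "q' \<in> nonterm_states G" using q' unfolding states_def by blast
            then have "hpay G \<sigma> k (h @ [(q, a)]) q' i \<le> W q' i"
              using Suc.IH nochain_step[OF nc st q'n] by blast
            then show ?thesis using tn extW by (simp add: mult_left_mono)
          qed
        qed simp
        have "hpay G \<sigma> (Suc k) h q i = (\<Sum>a\<in>profiles G. prof_prob G (\<lambda>j. \<sigma> j h q) a *
            (\<Sum>q'\<in>states G. trans G q a q' * hpay G \<sigma> k (h @ [(q, a)]) q' i))"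
          using nt q1 by simp
        also have "\<dots> \<le> (\<Sum>a\<in>profiles G. prof_prob G (\<lambda>j. \<sigma> j h q) a *
            (\<Sum>q'\<in>states G. trans G q a q' * ext_val G W q' i))"
          by (intro sum_mono mult_left_mono prof_prob_nonneg inner)
        also have "\<dots> = stage_util G W q ((\<lambda>j. s_star j q)(i := \<tau> h q)) i"
          unfolding stage_util_def pe ..
        also have "\<dots> \<le> stage_util G W q (\<lambda>j. s_star j q) i"
          using LN[OF i q1] \<tau> q1 unfolding valid_behav_def by blast
        also have "\<dots> = W q i" using Weq[OF q1] by simp
        finally show "hpay G \<sigma> (Suc k) h q i \<le> W q i" .
      qed
    qed
    have nt: "q \<notin> term_states G" using q fin_facts(3)[OF game] by blast
    have "game_payoff G \<sigma> q i = hpay G \<sigma> T [] q i" by (rule game_payoff_T[OF game T q])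
    also have "\<dots> \<le> W q i" using bound T q by blast
    also have "\<dots> = hpay G (stat_embed s_star) T [] q i" using nt q by (simp add: W_def Wst_def)
    also have "\<dots> = game_payoff G (stat_embed s_star) q i" by (rule game_payoff_T[OF game T q, symmetric])
    finally show "game_payoff G ((stat_embed s_star)(i := \<tau>)) q i \<le> game_payoff G (stat_embed s_star) q i"
      unfolding \<sigma>_def .
  qed
qed

end
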